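(* The polynomials $Q_A,R_A\in\mathbb Q[p,d]$ are nonzero at every point of $\Sigma_A^\circ:=\{(p,d):\tfrac12<p<1,\ 0<d<\tfrac12\}$, and the polynomials $Q_B,R_B\in\mathbb Q[p,d,e]$ are nonzero at every point of $\Sigma_B^\circ:=\{(p,d,e):\tfrac12<p<1,\ d>0,\ e>0,\ d+e<\tfrac12\}$, where \begin{align*} Q_A={}&8d^4-8d^3p+2d^3-48d^2p^2+22d^2p-3d^2-8dp^3+22dp^2-6dp+8p^4+2p^3-3p^2,\\ R_A={}&8d^4-2d^3-24d^2p^2+6d^2p-d^2+10dp^2-2dp+2p^3-p^2,\\ Q_B={}&8d^4+32d^3e-8d^3p+2d^3+40d^2e^2-56d^2ep+16d^2e-48d^2p^2+22d^2p-3d^2\\ &+16de^3-72de^2p+26de^2-72dep^2+44dep-6de-8dp^3+22dp^2-6dp\\ &-24e^3p+12e^3-32e^2p^2+22e^2p-3e^2+12ep^2-6ep+8p^4+2p^3-3p^2,\\ R_B={}&8d^4+32d^3e-2d^3+40d^2e^2-24d^2ep-24d^2p^2+6d^2p-d^2\\ &+16de^3-32de^2p+6de^2-24dep^2+12dep-2de+10dp^2-2dp\\ &-8e^3p+4e^3-8e^2p^2+6e^2p-e^2+4ep^2-2ep+2p^3-p^2. \end{align*} Moreover, the branch maps $F_0^A,F_1^A$ are $C^\infty$ on $\Sigma_A^\circ$ and $F_0^B,F_1^B$ are $C^\infty$ on $\Sigma_B^\circ$.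
   Context: Let $$L_A=\begin{pmatrix}1&1&-1&-1\\-1&1&1&1\\1&-1&-1&1\\1&-1&1&-1\end{pmatrix},\qquad L_B=\begin{pmatrix}1&1&-1&-1\\-1&1&1&1\\1&-1&-1&1\\1&-1&1&-1\\1&-1&1&1\end{pmatrix}.$$ For a sign matrix $L$ and a distribution $u$ on its rows, the one-step AdaBoost update using column $j$ is $u'_i=u_i/(1+\mu L_{ij})$ with $\mu=(u^\top L)_j$. Chart coordinates: $(p,d)$ corresponds to the distribution $(p-\tfrac12,\,1-p,\,\tfrac12-d,\,d)$ on the rows of $L_A$, and $(p,d,e)$ corresponds to $(p-\tfrac12,\,1-p,\,\tfrac12-d-e,\,d,\,e)$ on the rows of $L_B$. For $G\in\{A,B\}$, the branch map $F_0^G$ is the composition of the five one-step updates on $L_G$ using columns $1,3,4,1,2$ in this order, and $F_1^G$ the composition using columns $1,4,3,1,2$, each applied to the distribution given by the chart coordinates and with the output (whose first two entries sum to $\tfrac12$) expressed again in chart coordinates. The polynomials $Q_A$ and $R_A$ are the reduced denominators of the first and second chart coordinates of $F_0^A$, and $Q_B,R_B$ are the reduced denominators of the coordinates of $F_0^B$ (with $R_B$ the common denominator of its second and third coordinates). *)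

theory Defs
  imports "HOL-Analysis.Analysis"
begin

text \<open>So D [v1,...,vk] x is the k-th Frechet
  derivative of f at x applied to (vk,...,v1).\<close>

definition C_infinity_on :: "'a::real_normed_vector set \<Rightarrow> ('a \<Rightarrow> 'b::real_normed_vector) \<Rightarrow> bool" where
  "C_infinity_on S f \<longleftrightarrow>
     (\<exists>D :: 'a list \<Rightarrow> 'a \<Rightarrow> 'b.
        (\<forall>x\<in>S. D [] x = f x) \<and>
        (\<forall>vs. \<forall>x\<in>S. (D vs has_derivative (\<lambda>v. D (v # vs) x)) (at x)) \<and>
        (\<forall>vs. continuous_on S (D vs)))"

definition LA :: "real list list" where
  "LA = [[1,1,-1,-1],[-1,1,1,1],[1,-1,-1,1],[1,-1,1,-1]]"

definition LB :: "real list list" where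
  "LB = [[1,1,-1,-1],[-1,1,1,1],[1,-1,-1,1],[1,-1,1,-1],[1,-1,1,1]]"

definition entry :: "real list list \<Rightarrow> nat \<Rightarrow> nat \<Rightarrow> real" where
  "entry L i j = L ! (i - 1) ! (j - 1)"

definition ada_step :: "real list list \<Rightarrow> nat \<Rightarrow> (nat \<Rightarrow> real) \<Rightarrow> (nat \<Rightarrow> real)" where
  "ada_step L j u =
     (let \<mu> = (\<Sum>i=1..length L. u i * entry L i j)
      in (\<lambda>i. u i / (1 + \<mu> * entry L i j)))"

definition ada_steps :: "real list list \<Rightarrow> nat list \<Rightarrow> (nat \<Rightarrow> real) \<Rightarrow> (nat \<Rightarrow> real)" where
  "ada_steps L js u = fold (\<lambda>j v. ada_step L j v) js u"

definition chartA :: "real \<times> real \<Rightarrow> (nat \<Rightarrow> real)" where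
  "chartA x = (case x of (p, d) \<Rightarrow> (\<lambda>i. [p - 1/2, 1 - p, 1/2 - d, d] ! (i - 1)))"

definition unchartA :: "(nat \<Rightarrow> real) \<Rightarrow> real \<times> real" where
  "unchartA u = (1 - u 2, u 4)"

definition chartB :: "real \<times> real \<times> real \<Rightarrow> (nat \<Rightarrow> real)" where
  "chartB x = (case x of (p, d, e) \<Rightarrow> (\<lambda>i. [p - 1/2, 1 - p, 1/2 - d - e, d, e] ! (i - 1)))"

definition unchartB :: "(nat \<Rightarrow> real) \<Rightarrow> real \<times> real \<times> real" where
  "unchartB u = (1 - u 2, u 4, u 5)"

definition F0A :: "real \<times> real \<Rightarrow> real \<times> real" where
  "F0A x = unchartA (ada_steps LA [1,3,4,1,2] (chartA x))"

definition F1A :: "real \<times> real \<Rightarrow> real \<times> real" where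
  "F1A x = unchartA (ada_steps LA [1,4,3,1,2] (chartA x))"

definition F0B :: "real \<times> real \<times> real \<Rightarrow> real \<times> real \<times> real" where
  "F0B x = unchartB (ada_steps LB [1,3,4,1,2] (chartB x))"

definition F1B :: "real \<times> real \<times> real \<Rightarrow> real \<times> real \<times> real" where
  "F1B x = unchartB (ada_steps LB [1,4,3,1,2] (chartB x))"

definition SigmaA :: "(real \<times> real) set" where
  "SigmaA = {(p, d). 1/2 < p \<and> p < 1 \<and> 0 < d \<and> d < 1/2}"

definition SigmaB :: "(real \<times> real \<times> real) set" where
  "SigmaB = {(p, d, e). 1/2 < p \<and> p < 1 \<and> 0 < d \<and> 0 < e \<and> d + e < 1/2}"

definition QA :: "real \<Rightarrow> real \<Rightarrow> real" where
  "QA p d = 8*d^4 - 8*d^3*p + 2*d^3 - 48*d^2*p^2 + 22*d^2*p - 3*d^2 - 8*d*p^3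
            + 22*d*p^2 - 6*d*p + 8*p^4 + 2*p^3 - 3*p^2"

definition RA :: "real \<Rightarrow> real \<Rightarrow> real" where
  "RA p d = 8*d^4 - 2*d^3 - 24*d^2*p^2 + 6*d^2*p - d^2 + 10*d*p^2 - 2*d*p + 2*p^3 - p^2"

definition QB :: "real \<Rightarrow> real \<Rightarrow> real \<Rightarrow> real" where
  "QB p d e = 8*d^4 + 32*d^3*e - 8*d^3*p + 2*d^3 + 40*d^2*e^2 - 56*d^2*e*p + 16*d^2*e
              - 48*d^2*p^2 + 22*d^2*p - 3*d^2
              + 16*d*e^3 - 72*d*e^2*p + 26*d*e^2 - 72*d*e*p^2 + 44*d*e*p - 6*d*e
              - 8*d*p^3 + 22*d*p^2 - 6*d*p
              - 24*e^3*p + 12*e^3 - 32*e^2*p^2 + 22*e^2*p - 3*e^2 + 12*e*p^2 - 6*e*p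
              + 8*p^4 + 2*p^3 - 3*p^2"

definition RB :: "real \<Rightarrow> real \<Rightarrow> real \<Rightarrow> real" where
  "RB p d e = 8*d^4 + 32*d^3*e - 2*d^3 + 40*d^2*e^2 - 24*d^2*e*p - 24*d^2*p^2 + 6*d^2*p - d^2
              + 16*d*e^3 - 32*d*e^2*p + 6*d*e^2 - 24*d*e*p^2 + 12*d*e*p - 2*d*e
              + 10*d*p^2 - 2*d*p
              - 8*e^3*p + 4*e^3 - 8*e^2*p^2 + 6*e^2*p - e^2 + 4*e*p^2 - 2*e*p + 2*p^3 - p^2"

end

theory Submission
  imports Defs
begin

datatype 'a fexp = Cst real | Lin "'a \<Rightarrow> real" | Add "'a fexp" "'a fexp"
  | Mul "'a fexp" "'a fexp" | Neg "'a fexp" | Inv "'a fexp"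

primrec ev :: "'a fexp \<Rightarrow> 'a \<Rightarrow> real" where
  "ev (Cst c) x = c"
| "ev (Lin l) x = l x"
| "ev (Add a b) x = ev a x + ev b x"
| "ev (Mul a b) x = ev a x * ev b x"
| "ev (Neg a) x = - ev a x"
| "ev (Inv a) x = inverse (ev a x)"

primrec wfe :: "('a::real_normed_vector) set \<Rightarrow> 'a fexp \<Rightarrow> bool" where
  "wfe S (Cst c) = True"
| "wfe S (Lin l) = bounded_linear l"
| "wfe S (Add a b) = (wfe S a \<and> wfe S b)"
| "wfe S (Mul a b) = (wfe S a \<and> wfe S b)"
| "wfe S (Neg a) = wfe S a"
| "wfe S (Inv a) = (wfe S a \<and> (\<forall>x\<in>S. ev a x \<noteq> 0))"

primrec der :: "'a \<Rightarrow> 'a fexp \<Rightarrow> 'a fexp" where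
  "der v (Cst c) = Cst 0"
| "der v (Lin l) = Cst (l v)"
| "der v (Add a b) = Add (der v a) (der v b)"
| "der v (Mul a b) = Add (Mul (der v a) b) (Mul a (der v b))"
| "der v (Neg a) = Neg (der v a)"
| "der v (Inv a) = Neg (Mul (der v a) (Mul (Inv a) (Inv a)))"

primrec dexp :: "'a fexp \<Rightarrow> 'a list \<Rightarrow> 'a fexp" where
  "dexp e [] = e"
| "dexp e (v # vs) = der v (dexp e vs)"

lemma wfe_der: "wfe S e \<Longrightarrow> wfe S (der v e)"
  by (induction e) auto

lemma wfe_dexp: "wfe S e \<Longrightarrow> wfe S (dexp e vs)"
  by (induction vs) (auto intro: wfe_der)

lemma ev_has_der:
  fixes x :: "'a::real_normed_vector"
  shows "wfe S e \<Longrightarrow> x \<in> S \<Longrightarrow> ((\<lambda>y. ev e y) has_derivative (\<lambda>v. ev (der v e) x)) (at x)"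
proof (induction e)
  case (Cst c)
  then show ?case by simp
next
  case (Lin l)
  then show ?case by (simp add: bounded_linear_imp_has_derivative)
next
  case (Add a b)
  then show ?case by (auto intro: has_derivative_add)
next
  case (Mul a b)
  then have "((\<lambda>y. ev a y * ev b y) has_derivative
      (\<lambda>h. ev a x * ev (der h b) x + ev (der h a) x * ev b x)) (at x)"
    by (auto intro: has_derivative_mult)
  moreover have "ev (Mul a b) = (\<lambda>y. ev a y * ev b y)" by (simp add: fun_eq_iff)
  ultimately show ?case by (auto elim!: has_derivative_eq_rhs simp: fun_eq_iff algebra_simps)
next
  case (Neg a)
  then show ?case by (auto intro: has_derivative_minus)
next
  case (Inv a)
  have nz: "ev a x \<noteq> 0" using Inv by auto
  have da: "(ev a has_derivative (\<lambda>v. ev (der v a) x)) (at x)" using Inv by auto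
  have "((\<lambda>y. inverse (ev a y)) has_derivative
      (\<lambda>h. - (inverse (ev a x) * ev (der h a) x * inverse (ev a x)))) (at x)"
    by (rule Deriv.has_derivative_inverse[OF nz da])
  moreover have "ev (Inv a) = (\<lambda>y. inverse (ev a y))" by (simp add: fun_eq_iff)
  ultimately show ?case by (auto elim!: has_derivative_eq_rhs simp: fun_eq_iff algebra_simps)
qed

lemma C_inf_ev:
  fixes S :: "'a::real_normed_vector set"
  assumes "wfe S e"
  shows "C_infinity_on S (ev e)"
  unfolding C_infinity_on_def
proof (intro exI[of _ "\<lambda>vs. ev (dexp e vs)"] conjI ballI allI)
  fix vs x assume "x \<in> S"
  then show "(ev (dexp e vs) has_derivative (\<lambda>v. ev (dexp e (v # vs)) x)) (at x)"
    using ev_has_der[OF wfe_dexp[OF assms], of x vs] by simp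
next
  fix vs
  show "continuous_on S (ev (dexp e vs))"
    using ev_has_der[OF wfe_dexp[OF assms]]
    by (meson continuous_at_imp_continuous_on has_derivative_continuous)
qed simp

lemma C_inf_pair:
  assumes "C_infinity_on S f" "C_infinity_on S g"
  shows "C_infinity_on S (\<lambda>x. (f x, g x))"
proof -
  obtain D1 where D1: "\<forall>x\<in>S. D1 [] x = f x" "\<forall>vs. \<forall>x\<in>S. (D1 vs has_derivative (\<lambda>v. D1 (v # vs) x)) (at x)"
     "\<forall>vs. continuous_on S (D1 vs)" using assms(1) unfolding C_infinity_on_def by blast
  obtain D2 where D2: "\<forall>x\<in>S. D2 [] x = g x" "\<forall>vs. \<forall>x\<in>S. (D2 vs has_derivative (\<lambda>v. D2 (v # vs) x)) (at x)"
     "\<forall>vs. continuous_on S (D2 vs)" using assms(2) unfolding C_infinity_on_def by blast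
  show ?thesis unfolding C_infinity_on_def
    apply (rule exI[of _ "\<lambda>vs x. (D1 vs x, D2 vs x)"])
    using D1 D2 by (auto intro!: has_derivative_Pair continuous_on_Pair)
qed


primrec esum :: "(nat \<Rightarrow> 'a fexp) \<Rightarrow> nat list \<Rightarrow> 'a fexp" where
  "esum es [] = Cst 0"
| "esum es (i # is) = Add (es i) (esum es is)"

lemma ev_esum: "ev (esum es is) x = sum_list (map (\<lambda>i. ev (es i) x) is)"
  by (induction "is") auto

lemma wfe_esum: "(\<forall>i. wfe S (es i)) \<Longrightarrow> wfe S (esum es is)"
  by (induction "is") auto

definition emu :: "real list list \<Rightarrow> nat \<Rightarrow> (nat \<Rightarrow> 'a fexp) \<Rightarrow> 'a fexp" where
  "emu L j es = esum (\<lambda>i. Mul (es i) (Cst (entry L i j))) [1..<length L + 1]"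

lemma ev_emu: "ev (emu L j es) x = (\<Sum>i=1..length L. ev (es i) x * entry L i j)"
proof -
  have "(\<Sum>i=1..length L. ev (es i) x * entry L i j)
      = (\<Sum>i\<in>set [1..<length L + 1]. ev (es i) x * entry L i j)"
  proof -
    have "set [1..<length L + 1] = {1..length L}" by auto
    then show ?thesis by simp
  qed
  also have "\<dots> = sum_list (map (\<lambda>i. ev (es i) x * entry L i j) [1..<length L + 1])"
    by (rule sum_set_upt_conv_sum_list_nat)
  finally show ?thesis by (simp add: emu_def ev_esum)
qed

definition estep :: "real list list \<Rightarrow> nat \<Rightarrow> (nat \<Rightarrow> 'a fexp) \<Rightarrow> (nat \<Rightarrow> 'a fexp)" where
  "estep L j es = (\<lambda>i. if 1 \<le> i \<and> i \<le> length L
      then Mul (es i) (Inv (Add (Cst 1) (Mul (emu L j es) (Cst (entry L i j))))) else es i)"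

definition esteps :: "real list list \<Rightarrow> nat list \<Rightarrow> (nat \<Rightarrow> 'a fexp) \<Rightarrow> (nat \<Rightarrow> 'a fexp)" where
  "esteps L js es = fold (\<lambda>j es. estep L j es) js es"

lemma ev_estep:
  assumes "i \<in> {1..length L}"
  shows "ev (estep L j es i) x = ada_step L j (\<lambda>k. ev (es k) x) i"
  using assms by (simp add: estep_def ada_step_def ev_emu Let_def divide_inverse)

lemma ada_step_cong:
  assumes "\<forall>i\<in>{1..length L}. u i = u' i" "i \<in> {1..length L}"
  shows "ada_step L j u i = ada_step L j u' i"
proof -
  have "(\<Sum>i=1..length L. u i * entry L i j) = (\<Sum>i=1..length L. u' i * entry L i j)"
    using assms(1) by (intro sum.cong) auto
  then show ?thesis using assms by (simp add: ada_step_def Let_def)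
qed

lemma ev_esteps:
  "\<forall>i\<in>{1..length L}. u i = ev (es i) x \<Longrightarrow> i \<in> {1..length L} \<Longrightarrow>
   ev (esteps L js es i) x = ada_steps L js u i"
proof (induction js arbitrary: es u)
  case Nil
  then show ?case by (simp add: esteps_def ada_steps_def)
next
  case (Cons j js)
  have "\<forall>i\<in>{1..length L}. ada_step L j u i = ev (estep L j es i) x"
    using Cons.prems(1) by (auto simp: ev_estep intro: ada_step_cong)
  from Cons.IH[OF this Cons.prems(2)] show ?case
    by (simp add: esteps_def ada_steps_def)
qed

definition colgood :: "real list list \<Rightarrow> nat \<Rightarrow> bool" where
  "colgood L j \<longleftrightarrow> (\<forall>i\<in>{1..length L}. entry L i j = 1 \<or> entry L i j = -1)
     \<and> (\<exists>i\<in>{1..length L}. entry L i j = 1) \<and> (\<exists>i\<in>{1..length L}. entry L i j = -1)"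

lemma mu_bounds:
  fixes u :: "nat \<Rightarrow> real"
  assumes cg: "colgood L j" and pos: "\<forall>i\<in>{1..length L}. u i > 0"
    and s1: "(\<Sum>i=1..length L. u i) = 1"
  shows "-1 < (\<Sum>i=1..length L. u i * entry L i j) \<and> (\<Sum>i=1..length L. u i * entry L i j) < 1"
proof
  obtain k where k: "k \<in> {1..length L}" "entry L k j = 1" using cg colgood_def by blast
  obtain k' where k': "k' \<in> {1..length L}" "entry L k' j = -1" using cg colgood_def by blast
  have "(\<Sum>i=1..length L. - u i) < (\<Sum>i=1..length L. u i * entry L i j)"
  proof (rule sum_strict_mono_ex1)
    show "\<forall>i\<in>{1..length L}. - u i \<le> u i * entry L i j"
      using cg pos unfolding colgood_def by force
    show "\<exists>i\<in>{1..length L}. - u i < u i * entry L i j"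
      using k pos by force
  qed simp
  then show "-1 < (\<Sum>i=1..length L. u i * entry L i j)" using s1 by (simp add: sum_negf)
  have "(\<Sum>i=1..length L. u i * entry L i j) < (\<Sum>i=1..length L. u i)"
  proof (rule sum_strict_mono_ex1)
    show "\<forall>i\<in>{1..length L}. u i * entry L i j \<le> u i"
      using cg pos unfolding colgood_def by force
    show "\<exists>i\<in>{1..length L}. u i * entry L i j < u i"
      using k' pos by force
  qed simp
  then show "(\<Sum>i=1..length L. u i * entry L i j) < 1" using s1 by simp
qed

lemma step_invariant:
  fixes u :: "nat \<Rightarrow> real"
  assumes cg: "colgood L j" and pos: "\<forall>i\<in>{1..length L}. u i > 0"
    and s1: "(\<Sum>i=1..length L. u i) = 1"
  shows "(\<forall>i\<in>{1..length L}. 1 + (\<Sum>i=1..length L. u i * entry L i j) * entry L i j > 0)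
    \<and> (\<forall>i\<in>{1..length L}. ada_step L j u i > 0)
    \<and> (\<Sum>i=1..length L. ada_step L j u i) = 1"
proof -
  define m where "m = (\<Sum>i=1..length L. u i * entry L i j)"
  have mb: "-1 < m" "m < 1" using mu_bounds[OF assms] m_def by auto
  have pm: "\<forall>i\<in>{1..length L}. 1 + m * entry L i j > 0"
    using cg mb unfolding colgood_def by force
  have "\<forall>i\<in>{1..length L}. ada_step L j u i > 0"
    using pm pos unfolding ada_step_def Let_def m_def[symmetric] by simp
  moreover have "(\<Sum>i=1..length L. ada_step L j u i) = 1"
  proof -
    have eq: "ada_step L j u i = (u i - m * (u i * entry L i j)) / (1 - m^2)"
      if i: "i \<in> {1..length L}" for i
    proof -
      have e: "entry L i j = 1 \<or> entry L i j = -1" using cg i unfolding colgood_def by blast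
      have "1 - m^2 \<noteq> 0" using mb by (simp add: power2_eq_square) (smt (verit) mult_less_cancel_left2 mult_minus_right)
      moreover have "1 + m * entry L i j \<noteq> 0" using pm i by force
      ultimately show ?thesis using e unfolding ada_step_def Let_def m_def[symmetric]
        by (auto simp add: field_simps power2_eq_square)
    qed
    have "(\<Sum>i=1..length L. ada_step L j u i)
        = (\<Sum>i=1..length L. (u i - m * (u i * entry L i j)) / (1 - m^2))"
      using eq by (intro sum.cong) auto
    also have "\<dots> = ((\<Sum>i=1..length L. u i) - m * m) / (1 - m^2)"
      by (simp add: sum_divide_distrib[symmetric] sum_subtractf sum_distrib_left[symmetric] m_def)
    also have "\<dots> = 1" using s1 mb
      by (simp add: power2_eq_square) (smt (verit) mult_less_cancel_left2 mult_minus_right)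
    finally show ?thesis .
  qed
  ultimately show ?thesis using pm m_def by auto
qed

definition einv :: "'a::real_normed_vector set \<Rightarrow> real list list \<Rightarrow> (nat \<Rightarrow> 'a fexp) \<Rightarrow> bool" where
  "einv S L es \<longleftrightarrow> (\<forall>i. wfe S (es i)) \<and> (\<forall>x\<in>S. (\<forall>i\<in>{1..length L}. ev (es i) x > 0)
      \<and> (\<Sum>i=1..length L. ev (es i) x) = 1)"

lemma einv_step:
  assumes inv: "einv S L es" and cg: "colgood L j"
  shows "einv S L (estep L j es)"
proof -
  have W: "\<forall>i. wfe S (es i)" and P: "\<forall>x\<in>S. (\<forall>i\<in>{1..length L}. ev (es i) x > 0)
      \<and> (\<Sum>i=1..length L. ev (es i) x) = 1" using inv unfolding einv_def by auto
  have SI: "(\<forall>i\<in>{1..length L}. 1 + (\<Sum>i=1..length L. ev (es i) x * entry L i j) * entry L i j > 0)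
    \<and> (\<forall>i\<in>{1..length L}. ada_step L j (\<lambda>k. ev (es k) x) i > 0)
    \<and> (\<Sum>i=1..length L. ada_step L j (\<lambda>k. ev (es k) x) i) = 1" if "x \<in> S" for x
  proof -
    have "\<forall>i\<in>{1..length L}. ev (es i) x > 0" "(\<Sum>i=1..length L. ev (es i) x) = 1"
      using P that by auto
    from step_invariant[OF cg this] show ?thesis .
  qed
  have "wfe S (estep L j es i)" for i
  proof (cases "i \<in> {1..length L}")
    case True
    have "wfe S (emu L j es)" unfolding emu_def using W by (intro wfe_esum) auto
    moreover have "\<forall>x\<in>S. 1 + (\<Sum>i=1..length L. ev (es i) x * entry L i j) * entry L i j \<noteq> 0"
      using SI True by (metis less_irrefl)
    ultimately show ?thesis using True W by (simp add: estep_def ev_emu)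
  next
    case False
    then show ?thesis using W by (auto simp: estep_def)
  qed
  moreover have "(\<forall>i\<in>{1..length L}. ev (estep L j es i) x > 0)
      \<and> (\<Sum>i=1..length L. ev (estep L j es i) x) = 1" if "x \<in> S" for x
  proof -
    have "(\<Sum>i=1..length L. ev (estep L j es i) x) = (\<Sum>i=1..length L. ada_step L j (\<lambda>k. ev (es k) x) i)"
      by (intro sum.cong) (auto simp: ev_estep)
    then show ?thesis using SI[OF that] by (simp add: ev_estep)
  qed
  ultimately show ?thesis unfolding einv_def by auto
qed

lemma einv_steps:
  "einv S L es \<Longrightarrow> \<forall>j\<in>set js. colgood L j \<Longrightarrow> einv S L (esteps L js es)"
proof (induction js arbitrary: es)
  case Nil
  then show ?case by (simp add: esteps_def)
next
  case (Cons j js)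
  have "einv S L (estep L j es)" using Cons.prems einv_step by auto
  from Cons.IH[OF this] Cons.prems(2) show ?case by (simp add: esteps_def)
qed


lemma QA_id: "QA p d = (let x = p - 1/2; y = 1 - p; z = 1/2 - d; w = d in 320*y^4*z^2*w^2 + 192*y^4*z^3*w + 1408*x*y^3*z*w^3 + 4288*x*y^3*z^2*w^2 + 2688*x*y^3*z^3*w + 320*x*y^3*z^4 + 320*x^2*y^2*w^4 + 6720*x^2*y^2*z*w^3 + 15744*x^2*y^2*z^2*w^2 + 10304*x^2*y^2*z^3*w + 1728*x^2*y^2*z^4 + 1088*x^3*y*w^4 + 11136*x^3*y*z*w^3 + 22976*x^3*y*z^2*w^2 + 15488*x^3*y*z^3*w + 3072*x^3*y*z^4 + 896*x^4*w^4 + 6336*x^4*z*w^3 + 11968*x^4*z^2*w^2 + 8192*x^4*z^3*w + 1792*x^4*z^4)"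
  unfolding QA_def Let_def by algebra

lemma RA_id: "RA p d = (let x = p - 1/2; y = 1 - p; z = 1/2 - d; w = d in 320*y^4*z^2*w^2 + 192*y^4*z^3*w + 640*x*y^3*z*w^3 + 2624*x*y^3*z^2*w^2 + 1536*x*y^3*z^3*w + 64*x*y^3*z^4 + 64*x^2*y^2*w^4 + 2624*x^2*y^2*z*w^3 + 7296*x^2*y^2*z^2*w^2 + 4288*x^2*y^2*z^3*w + 320*x^2*y^2*z^4 + 192*x^3*y*w^4 + 3584*x^3*y*z*w^3 + 8384*x^3*y*z^2*w^2 + 4992*x^3*y*z^3*w + 512*x^3*y*z^4 + 128*x^4*w^4 + 1600*x^4*z*w^3 + 3392*x^4*z^2*w^2 + 2048*x^4*z^3*w + 256*x^4*z^4)"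
  unfolding RA_def Let_def by algebra

lemma QB_id: "QB p d e = (let x = p - 1/2; y = 1 - p; z = 1/2 - d - e; w = d; t = e in 448*y^4*z^2*w*t + 320*y^4*z^2*w^2 + 192*y^4*z^3*w + 1408*x*y^3*z*t^3 + 4480*x*y^3*z*w*t^2 + 4480*x*y^3*z*w^2*t + 1408*x*y^3*z*w^3 + 2752*x*y^3*z^2*t^2 + 7808*x*y^3*z^2*w*t + 4288*x*y^3*z^2*w^2 + 1664*x*y^3*z^3*t + 2688*x*y^3*z^3*w + 320*x*y^3*z^4 + 640*x^2*y^2*t^4 + 2368*x^2*y^2*w*t^3 + 3136*x^2*y^2*w^2*t^2 + 1728*x^2*y^2*w^3*t + 320*x^2*y^2*w^4 + 7424*x^2*y^2*z*t^3 + 22592*x^2*y^2*z*w*t^2 + 21888*x^2*y^2*z*w^2*t + 6720*x^2*y^2*z*w^3 + 13504*x^2*y^2*z^2*t^2 + 30912*x^2*y^2*z^2*w*t + 15744*x^2*y^2*z^2*w^2 + 8448*x^2*y^2*z^3*t + 10304*x^2*y^2*z^3*w + 1728*x^2*y^2*z^4 + 1856*x^3*y*t^4 + 6912*x^3*y*w*t^3 + 9344*x^3*y*w^2*t^2 + 5376*x^3*y*w^3*t + 1088*x^3*y*w^4 + 12928*x^3*y*z*t^3 + 38272*x^3*y*z*w*t^2 + 36480*x^3*y*z*w^2*t + 11136*x^3*y*z*w^3 + 22208*x^3*y*z^2*t^2 + 46720*x^3*y*z^2*w*t + 22976*x^3*y*z^2*w^2 + 14208*x^3*y*z^3*t + 15488*x^3*y*z^3*w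 + 3072*x^3*y*z^4 + 1344*x^4*t^4 + 5056*x^4*w*t^3 + 6976*x^4*w^2*t^2 + 4160*x^4*w^3*t + 896*x^4*w^4 + 7424*x^4*z*t^3 + 21696*x^4*z*w*t^2 + 20608*x^4*z*w^2*t + 6336*x^4*z*w^3 + 12224*x^4*z^2*t^2 + 24704*x^4*z^2*w*t + 11968*x^4*z^2*w^2 + 7936*x^4*z^3*t + 8192*x^4*z^3*w + 1792*x^4*z^4)"
  unfolding QB_def Let_def by algebra

lemma RB_id: "RB p d e = (let x = p - 1/2; y = 1 - p; z = 1/2 - d - e; w = d; t = e in 448*y^4*z^2*w*t + 320*y^4*z^2*w^2 + 192*y^4*z^3*w + 384*x*y^3*z*t^3 + 1664*x*y^3*z*w*t^2 + 1920*x*y^3*z*w^2*t + 640*x*y^3*z*w^3 + 704*x*y^3*z^2*t^2 + 4096*x*y^3*z^2*w*t + 2624*x*y^3*z^2*w^2 + 384*x*y^3*z^3*t + 1536*x*y^3*z^3*w + 64*x*y^3*z^4 + 128*x^2*y^2*t^4 + 576*x^2*y^2*w*t^3 + 832*x^2*y^2*w^2*t^2 + 448*x^2*y^2*w^3*t + 64*x^2*y^2*w^4 + 1792*x^2*y^2*z*t^3 + 7232*x^2*y^2*z*w*t^2 + 8064*x^2*y^2*z*w^2*t + 2624*x^2*y^2*z*w^3 + 3136*x^2*y^2*z^2*t^2 + 12096*x^2*y^2*z^2*w*t + 7296*x^2*y^2*z^2*w^2 + 1792*x^2*y^2*z^3*t + 4288*x^2*y^2*z^3*w + 320*x^2*y^2*z^4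 + 320*x^3*y*t^4 + 1408*x^3*y*w*t^3 + 2048*x^3*y*w^2*t^2 + 1152*x^3*y*w^3*t + 192*x^3*y*w^4 + 2688*x^3*y*z*t^3 + 10240*x^3*y*z*w*t^2 + 11136*x^3*y*z*w^2*t + 3584*x^3*y*z*w^3 + 4544*x^3*y*z^2*t^2 + 14464*x^3*y*z^2*w*t + 8384*x^3*y*z^2*w^2 + 2688*x^3*y*z^3*t + 4992*x^3*y*z^3*w + 512*x^3*y*z^4 + 192*x^4*t^4 + 832*x^4*w*t^3 + 1216*x^4*w^2*t^2 + 704*x^4*w^3*t + 128*x^4*w^4 + 1280*x^4*z*t^3 + 4672*x^4*z*w*t^2 + 4992*x^4*z*w^2*t + 1600*x^4*z*w^3 + 2112*x^4*z^2*t^2 + 6016*x^4*z^2*w*t + 3392*x^4*z^2*w^2 + 1280*x^4*z^3*t + 2048*x^4*z^3*w + 256*x^4*z^4)"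
  unfolding RB_def Let_def by algebra

lemma HQA_pos: fixes x y z w :: real assumes "0<x" "0<y" "0<z" "0<w"
  shows "0 < 320*y^4*z^2*w^2 + 192*y^4*z^3*w + 1408*x*y^3*z*w^3 + 4288*x*y^3*z^2*w^2 + 2688*x*y^3*z^3*w + 320*x*y^3*z^4 + 320*x^2*y^2*w^4 + 6720*x^2*y^2*z*w^3 + 15744*x^2*y^2*z^2*w^2 + 10304*x^2*y^2*z^3*w + 1728*x^2*y^2*z^4 + 1088*x^3*y*w^4 + 11136*x^3*y*z*w^3 + 22976*x^3*y*z^2*w^2 + 15488*x^3*y*z^3*w + 3072*x^3*y*z^4 + 896*x^4*w^4 + 6336*x^4*z*w^3 + 11968*x^4*z^2*w^2 + 8192*x^4*z^3*w + 1792*x^4*z^4"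
  by (intro add_pos_pos mult_pos_pos zero_less_power) (simp_all add: assms)

lemma HRA_pos: fixes x y z w :: real assumes "0<x" "0<y" "0<z" "0<w"
  shows "0 < 320*y^4*z^2*w^2 + 192*y^4*z^3*w + 640*x*y^3*z*w^3 + 2624*x*y^3*z^2*w^2 + 1536*x*y^3*z^3*w + 64*x*y^3*z^4 + 64*x^2*y^2*w^4 + 2624*x^2*y^2*z*w^3 + 7296*x^2*y^2*z^2*w^2 + 4288*x^2*y^2*z^3*w + 320*x^2*y^2*z^4 + 192*x^3*y*w^4 + 3584*x^3*y*z*w^3 + 8384*x^3*y*z^2*w^2 + 4992*x^3*y*z^3*w + 512*x^3*y*z^4 + 128*x^4*w^4 + 1600*x^4*z*w^3 + 3392*x^4*z^2*w^2 + 2048*x^4*z^3*w + 256*x^4*z^4"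
  by (intro add_pos_pos mult_pos_pos zero_less_power) (simp_all add: assms)

lemma HQB_pos: fixes x y z w t :: real assumes "0<x" "0<y" "0<z" "0<w" "0<t"
  shows "0 < 448*y^4*z^2*w*t + 320*y^4*z^2*w^2 + 192*y^4*z^3*w + 1408*x*y^3*z*t^3 + 4480*x*y^3*z*w*t^2 + 4480*x*y^3*z*w^2*t + 1408*x*y^3*z*w^3 + 2752*x*y^3*z^2*t^2 + 7808*x*y^3*z^2*w*t + 4288*x*y^3*z^2*w^2 + 1664*x*y^3*z^3*t + 2688*x*y^3*z^3*w + 320*x*y^3*z^4 + 640*x^2*y^2*t^4 + 2368*x^2*y^2*w*t^3 + 3136*x^2*y^2*w^2*t^2 + 1728*x^2*y^2*w^3*t + 320*x^2*y^2*w^4 + 7424*x^2*y^2*z*t^3 + 22592*x^2*y^2*z*w*t^2 + 21888*x^2*y^2*z*w^2*t + 6720*x^2*y^2*z*w^3 + 13504*x^2*y^2*z^2*t^2 + 30912*x^2*y^2*z^2*w*t + 15744*x^2*y^2*z^2*w^2 + 8448*x^2*y^2*z^3*t + 10304*x^2*y^2*z^3*w + 1728*x^2*y^2*z^4 + 1856*x^3*y*t^4 + 6912*x^3*y*w*t^3 + 9344*x^3*y*w^2*t^2 + 5376*x^3*y*w^3*t + 1088*x^3*y*w^4 + 12928*x^3*y*z*t^3 + 38272*x^3*y*z*w*t^2 + 36480*x^3*y*z*w^2*t + 11136*x^3*y*z*w^3 + 22208*x^3*y*z^2*t^2 + 46720*x^3*y*z^2*w*t + 22976*x^3*y*z^2*w^2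 + 14208*x^3*y*z^3*t + 15488*x^3*y*z^3*w + 3072*x^3*y*z^4 + 1344*x^4*t^4 + 5056*x^4*w*t^3 + 6976*x^4*w^2*t^2 + 4160*x^4*w^3*t + 896*x^4*w^4 + 7424*x^4*z*t^3 + 21696*x^4*z*w*t^2 + 20608*x^4*z*w^2*t + 6336*x^4*z*w^3 + 12224*x^4*z^2*t^2 + 24704*x^4*z^2*w*t + 11968*x^4*z^2*w^2 + 7936*x^4*z^3*t + 8192*x^4*z^3*w + 1792*x^4*z^4"
  by (intro add_pos_pos mult_pos_pos zero_less_power) (simp_all add: assms)

lemma HRB_pos: fixes x y z w t :: real assumes "0<x" "0<y" "0<z" "0<w" "0<t"
  shows "0 < 448*y^4*z^2*w*t + 320*y^4*z^2*w^2 + 192*y^4*z^3*w + 384*x*y^3*z*t^3 + 1664*x*y^3*z*w*t^2 + 1920*x*y^3*z*w^2*t + 640*x*y^3*z*w^3 + 704*x*y^3*z^2*t^2 + 4096*x*y^3*z^2*w*t + 2624*x*y^3*z^2*w^2 + 384*x*y^3*z^3*t + 1536*x*y^3*z^3*w + 64*x*y^3*z^4 + 128*x^2*y^2*t^4 + 576*x^2*y^2*w*t^3 + 832*x^2*y^2*w^2*t^2 + 448*x^2*y^2*w^3*t + 64*x^2*y^2*w^4 + 1792*x^2*y^2*z*t^3 + 7232*x^2*y^2*z*w*t^2 + 8064*x^2*y^2*z*w^2*t + 2624*x^2*y^2*z*w^3 + 3136*x^2*y^2*z^2*t^2 + 12096*x^2*y^2*z^2*w*t + 7296*x^2*y^2*z^2*w^2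 + 1792*x^2*y^2*z^3*t + 4288*x^2*y^2*z^3*w + 320*x^2*y^2*z^4 + 320*x^3*y*t^4 + 1408*x^3*y*w*t^3 + 2048*x^3*y*w^2*t^2 + 1152*x^3*y*w^3*t + 192*x^3*y*w^4 + 2688*x^3*y*z*t^3 + 10240*x^3*y*z*w*t^2 + 11136*x^3*y*z*w^2*t + 3584*x^3*y*z*w^3 + 4544*x^3*y*z^2*t^2 + 14464*x^3*y*z^2*w*t + 8384*x^3*y*z^2*w^2 + 2688*x^3*y*z^3*t + 4992*x^3*y*z^3*w + 512*x^3*y*z^4 + 192*x^4*t^4 + 832*x^4*w*t^3 + 1216*x^4*w^2*t^2 + 704*x^4*w^3*t + 128*x^4*w^4 + 1280*x^4*z*t^3 + 4672*x^4*z*w*t^2 + 4992*x^4*z*w^2*t + 1600*x^4*z*w^3 + 2112*x^4*z^2*t^2 + 6016*x^4*z^2*w*t + 3392*x^4*z^2*w^2 + 1280*x^4*z^3*t + 2048*x^4*z^3*w + 256*x^4*z^4"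
  by (intro add_pos_pos mult_pos_pos zero_less_power) (simp_all add: assms)

lemma polysA: "\<forall>(p, d)\<in>SigmaA. QA p d \<noteq> 0 \<and> RA p d \<noteq> 0"
proof (clarify)
  fix p d assume "(p, d) \<in> SigmaA"
  then have h: "0 < p - 1/2" "0 < 1 - p" "0 < 1/2 - d" "0 < d" by (auto simp: SigmaA_def)
  show "QA p d \<noteq> 0 \<and> RA p d \<noteq> 0"
    using HQA_pos[OF h] HRA_pos[OF h] unfolding QA_id RA_id Let_def by simp
qed

lemma polysB: "\<forall>(p, d, e)\<in>SigmaB. QB p d e \<noteq> 0 \<and> RB p d e \<noteq> 0"
proof (clarify)
  fix p d e assume "(p, d, e) \<in> SigmaB"
  then have h: "0 < p - 1/2" "0 < 1 - p" "0 < 1/2 - d - e" "0 < d" "0 < e" by (auto simp: SigmaB_def)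
  show "QB p d e \<noteq> 0 \<and> RB p d e \<noteq> 0"
    using HQB_pos[OF h] HRB_pos[OF h] unfolding QB_id RB_id Let_def by simp
qed


lemma smooth_comp:
  assumes inv: "einv S L es" and cg: "\<forall>j\<in>set js. colgood L j"
    and ch: "\<forall>x. \<forall>i\<in>{1..length L}. c x i = ev (es i) x" and i: "i \<in> {1..length L}"
  shows "C_infinity_on S (\<lambda>x. ada_steps L js (c x) i)"
    and "C_infinity_on S (\<lambda>x. 1 - ada_steps L js (c x) i)"
proof -
  have inv': "einv S L (esteps L js es)" by (rule einv_steps[OF inv cg])
  then have w: "wfe S (esteps L js es i)" unfolding einv_def by auto
  have eq: "ada_steps L js (c x) i = ev (esteps L js es i) x" for x
    using ev_esteps[OF _ i, of "c x" es x js] ch by auto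
  have "(\<lambda>x. ada_steps L js (c x) i) = ev (esteps L js es i)" using eq by auto
  then show "C_infinity_on S (\<lambda>x. ada_steps L js (c x) i)" using C_inf_ev[OF w] by simp
  have w2: "wfe S (Add (Cst 1) (Neg (esteps L js es i)))" using w by simp
  have "(\<lambda>x. 1 - ada_steps L js (c x) i) = ev (Add (Cst 1) (Neg (esteps L js es i)))" using eq by auto
  then show "C_infinity_on S (\<lambda>x. 1 - ada_steps L js (c x) i)" using C_inf_ev[OF w2] by simp
qed

definition chA :: "nat \<Rightarrow> (real \<times> real) fexp" where
  "chA i = (if i = 1 then Add (Lin fst) (Cst (-1/2)) else if i = 2 then Add (Cst 1) (Neg (Lin fst))
     else if i = 3 then Add (Cst (1/2)) (Neg (Lin snd)) else if i = 4 then Lin snd else Cst 0)"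

definition chB :: "nat \<Rightarrow> (real \<times> real \<times> real) fexp" where
  "chB i = (if i = 1 then Add (Lin fst) (Cst (-1/2)) else if i = 2 then Add (Cst 1) (Neg (Lin fst))
     else if i = 3 then Add (Cst (1/2)) (Neg (Add (Lin (\<lambda>x. fst (snd x))) (Lin (\<lambda>x. snd (snd x)))))
     else if i = 4 then Lin (\<lambda>x. fst (snd x)) else if i = 5 then Lin (\<lambda>x. snd (snd x)) else Cst 0)"

lemma four: "{1..4::nat} = {1,2,3,4}" by auto
lemma five: "{1..5::nat} = {1,2,3,4,5}" by auto

lemma lenA: "length LA = 4" by (simp add: LA_def)
lemma lenB: "length LB = 5" by (simp add: LB_def)

lemma blfs: "bounded_linear (\<lambda>x::real\<times>real\<times>real. fst (snd x))"
  using bounded_linear_compose[OF bounded_linear_fst bounded_linear_snd] by (simp add: o_def)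
lemma blss: "bounded_linear (\<lambda>x::real\<times>real\<times>real. snd (snd x))"
  using bounded_linear_compose[OF bounded_linear_snd bounded_linear_snd] by (simp add: o_def)

lemma einvA: "einv SigmaA LA chA"
  unfolding einv_def lenA four
  by (auto simp: chA_def SigmaA_def bounded_linear_fst bounded_linear_snd)

lemma einvB: "einv SigmaB LB chB"
  unfolding einv_def lenB five
  by (auto simp: chB_def SigmaB_def bounded_linear_fst bounded_linear_snd blfs blss)

lemma cgA: "\<forall>j\<in>set [1,3,4,1,2]. colgood LA j" "\<forall>j\<in>set [1,4,3,1,2]. colgood LA j"
  unfolding colgood_def lenA four by (auto simp: entry_def LA_def)

lemma cgB: "\<forall>j\<in>set [1,3,4,1,2]. colgood LB j" "\<forall>j\<in>set [1,4,3,1,2]. colgood LB j"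
  unfolding colgood_def lenB five by (auto simp: entry_def LB_def)

lemma chA_ok: "\<forall>x. \<forall>i\<in>{1..length LA}. chartA x i = ev (chA i) x"
  unfolding lenA four by (auto simp: chartA_def chA_def split: prod.splits)

lemma chB_ok: "\<forall>x. \<forall>i\<in>{1..length LB}. chartB x i = ev (chB i) x"
  unfolding lenB five by (auto simp: chartB_def chB_def split: prod.splits)

lemma smoothA:
  assumes "\<forall>j\<in>set js. colgood LA j"
  shows "C_infinity_on SigmaA (\<lambda>x. unchartA (ada_steps LA js (chartA x)))"
proof -
  have "C_infinity_on SigmaA (\<lambda>x. (1 - ada_steps LA js (chartA x) 2, ada_steps LA js (chartA x) 4))"
    by (intro C_inf_pair smooth_comp[OF einvA assms chA_ok]) (auto simp: lenA)
  then show ?thesis by (simp add: unchartA_def)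
qed

lemma smoothB:
  assumes "\<forall>j\<in>set js. colgood LB j"
  shows "C_infinity_on SigmaB (\<lambda>x. unchartB (ada_steps LB js (chartB x)))"
proof -
  have "C_infinity_on SigmaB (\<lambda>x. (1 - ada_steps LB js (chartB x) 2,
          (ada_steps LB js (chartB x) 4, ada_steps LB js (chartB x) 5)))"
    by (intro C_inf_pair smooth_comp[OF einvB assms chB_ok]) (auto simp: lenB)
  then show ?thesis by (simp add: unchartB_def)
qed

theorem lemma3:
  shows "(\<forall>(p, d)\<in>SigmaA. QA p d \<noteq> 0 \<and> RA p d \<noteq> 0)
       \<and> (\<forall>(p, d, e)\<in>SigmaB. QB p d e \<noteq> 0 \<and> RB p d e \<noteq> 0)
       \<and> C_infinity_on SigmaA F0A \<and> C_infinity_on SigmaA F1A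
       \<and> C_infinity_on SigmaB F0B \<and> C_infinity_on SigmaB F1B"
proof (intro conjI polysA polysB)
  show "C_infinity_on SigmaA F0A" using smoothA[OF cgA(1)] by (simp add: F0A_def[abs_def])
  show "C_infinity_on SigmaA F1A" using smoothA[OF cgA(2)] by (simp add: F1A_def[abs_def])
  show "C_infinity_on SigmaB F0B" using smoothB[OF cgB(1)] by (simp add: F0B_def[abs_def])
  show "C_infinity_on SigmaB F1B" using smoothB[OF cgB(2)] by (simp add: F1B_def[abs_def])
qed

end
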